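(* Let $\mathcal{F}=C_1\wedge\dots\wedge C_m$ be an unsatisfiable CNF formula and let $X=\{x_1,\dots,x_{n_1}\}$, $Y=\{y_1,\dots,y_{n_2}\}$ be a partition of its variables. If there is a monotone circuit of size $\ell$ that outputs $1$ on every input in $\mathcal{U}(\{0,1\}^{n_1})$ and $0$ on every input in $\mathcal{V}(\{0,1\}^{n_2})$, then there is a $\mathsf{CC}_2$-refutation of $\mathcal{F}$ of length $\ell$ with respect to $(X,Y)$.
   Context: A semantic refutation of $\mathcal{F}$ is a sequence $L_1,\dots,L_\ell$ of Boolean functions on all variables with $L_i=C_i$ for $i\le m$, $L_\ell\equiv 0$, and for each $i>m$ there are $j,k<i$ with $L_j\wedge L_k\Rightarrow L_i$ pointwise; its length is $\ell$. A $\mathsf{CC}_k$-refutation with respect to $(X,Y)$ is a semantic refutation in which every $L_i$ is computable by a deterministic $k$-bit two-party communication protocol where Alice holds the $X$-variables and Bob the $Y$-variables. For each clause $C_i$ let $\mathrm{vars}(i)$ be the set of $X$-variables occurring in $C_i$. The inputs are Boolean variables $\mathrm{TT}_i(\alpha)$ for $i\in[m]$, $\alpha\in\{0,1\}^{\mathrm{vars}(i)}$ (these are inputs of the monotone function $\mathrm{CSP\text{-}SAT}_{\mathsf{Search}(\mathcal{F})}$, which accepts iff some $x\in\{0,1\}^{n_1}$ has $\mathrm{TT}_i(x|_{\mathrm{vars}(i)})=1$ for all $i$). For $x\in\{0,1\}^{n_1}$, $\mathcal{U}(x)$ sets $\mathrm{TT}_i(\alpha)=1$ iff $\alpha=x|_{\mathrm{vars}(i)}$.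 For $y\in\{0,1\}^{n_2}$, $\mathcal{V}(y)$ sets $\mathrm{TT}_i(\alpha)=0$ iff $C_i$ is falsified by the assignment giving $\alpha$ to $\mathrm{vars}(i)$ and $y$ to the $Y$-variables. A monotone circuit uses only $\wedge$ and $\vee$ gates; size is the number of gates.
   Formalization: The $\mathsf{CC}_2$-refutation of $\mathcal{F}$ consists of the $m$ clause lines followed by $\ell$ further lines, so its total length is m + $\ell$ rather than $\ell$. The statement above fails without it. *)

theory Defs
  imports Main
begin

text \<open>Variables: Inl i is x_i (i < n1, held by Alice), Inr j is y_j (j < n2, held by Bob).
  A literal is (variable, polarity); it is true iff the variable has value = polarity.\<close>

type_synonym var = "nat + nat"
type_synonym lit = "var \<times> bool"
type_synonym clause = "lit set"
type_synonym cnf = "clause list"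

fun var_val :: "bool list \<Rightarrow> bool list \<Rightarrow> var \<Rightarrow> bool" where
  "var_val x y (Inl i) = x ! i"
| "var_val x y (Inr j) = y ! j"

definition clause_sat :: "bool list \<Rightarrow> bool list \<Rightarrow> clause \<Rightarrow> bool" where
  "clause_sat x y C \<longleftrightarrow> (\<exists>(v, b) \<in> C. var_val x y v = b)"

definition valid_assign :: "nat \<Rightarrow> nat \<Rightarrow> bool list \<Rightarrow> bool list \<Rightarrow> bool" where
  "valid_assign n1 n2 x y \<longleftrightarrow> length x = n1 \<and> length y = n2"

definition var_in_range :: "nat \<Rightarrow> nat \<Rightarrow> var \<Rightarrow> bool" where
  "var_in_range n1 n2 v \<longleftrightarrow> (case v of Inl i \<Rightarrow> i < n1 | Inr j \<Rightarrow> j < n2)"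

definition wf_cnf :: "nat \<Rightarrow> nat \<Rightarrow> cnf \<Rightarrow> bool" where
  "wf_cnf n1 n2 F \<longleftrightarrow> (\<forall>C \<in> set F. \<forall>(v, b) \<in> C. var_in_range n1 n2 v)"

definition unsat :: "nat \<Rightarrow> nat \<Rightarrow> cnf \<Rightarrow> bool" where
  "unsat n1 n2 F \<longleftrightarrow> (\<forall>x y. valid_assign n1 n2 x y \<longrightarrow> (\<exists>C \<in> set F. \<not> clause_sat x y C))"

datatype ('a, 'b) protocol =
    Out bool
  | Alice "'a \<Rightarrow> bool" "('a, 'b) protocol" "('a, 'b) protocol"
  | Bob "'b \<Rightarrow> bool" "('a, 'b) protocol" "('a, 'b) protocol"

fun prot_eval :: "('a, 'b) protocol \<Rightarrow> 'a \<Rightarrow> 'b \<Rightarrow> bool" where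
  "prot_eval (Out c) a b = c"
| "prot_eval (Alice f P Q) a b = (if f a then prot_eval P a b else prot_eval Q a b)"
| "prot_eval (Bob g P Q) a b = (if g b then prot_eval P a b else prot_eval Q a b)"

fun prot_cost :: "('a, 'b) protocol \<Rightarrow> nat" where
  "prot_cost (Out c) = 0"
| "prot_cost (Alice f P Q) = Suc (max (prot_cost P) (prot_cost Q))"
| "prot_cost (Bob g P Q) = Suc (max (prot_cost P) (prot_cost Q))"

definition cc_computable :: "nat \<Rightarrow> nat \<Rightarrow> nat \<Rightarrow> (bool list \<Rightarrow> bool list \<Rightarrow> bool) \<Rightarrow> bool" where
  "cc_computable k n1 n2 L \<longleftrightarrow>
     (\<exists>P :: (bool list, bool list) protocol. prot_cost P \<le> k \<and>
        (\<forall>x y. valid_assign n1 n2 x y \<longrightarrow> prot_eval P x y = L x y))"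

definition semantic_refutation ::
  "nat \<Rightarrow> nat \<Rightarrow> cnf \<Rightarrow> (bool list \<Rightarrow> bool list \<Rightarrow> bool) list \<Rightarrow> bool" where
  "semantic_refutation n1 n2 F Ls \<longleftrightarrow>
     length F \<le> length Ls \<and> Ls \<noteq> [] \<and>
     (\<forall>i < length F. \<forall>x y. valid_assign n1 n2 x y \<longrightarrow> (Ls ! i) x y = clause_sat x y (F ! i)) \<and>
     (\<forall>x y. valid_assign n1 n2 x y \<longrightarrow> \<not> last Ls x y) \<and>
     (\<forall>i. length F \<le> i \<and> i < length Ls \<longrightarrow>
        (\<exists>j k. j < i \<and> k < i \<and>
           (\<forall>x y. valid_assign n1 n2 x y \<longrightarrow> (Ls ! j) x y \<and> (Ls ! k) x y \<longrightarrow> (Ls ! i) x y)))"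

definition CC_refutation ::
  "nat \<Rightarrow> nat \<Rightarrow> nat \<Rightarrow> cnf \<Rightarrow> (bool list \<Rightarrow> bool list \<Rightarrow> bool) list \<Rightarrow> bool" where
  "CC_refutation k n1 n2 F Ls \<longleftrightarrow>
     semantic_refutation n1 n2 F Ls \<and> (\<forall>L \<in> set Ls. cc_computable k n1 n2 L)"

text \<open>vars(i): indices of X-variables occurring in clause C_i.  An assignment
  alpha in {0,1}^vars(i) is represented by the set of indices it sets to 1
  (a subset of vars(i)).  The input TT_i(alpha) is indexed by the pair (i, alpha).\<close>

definition xvars :: "cnf \<Rightarrow> nat \<Rightarrow> nat set" where
  "xvars F i = {j. \<exists>b. (Inl j, b) \<in> F ! i}"

definition tt_inputs :: "cnf \<Rightarrow> (nat \<times> nat set) set" where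
  "tt_inputs F = {(i, \<alpha>). i < length F \<and> \<alpha> \<subseteq> xvars F i}"

definition U_inp :: "cnf \<Rightarrow> bool list \<Rightarrow> nat \<times> nat set \<Rightarrow> bool" where
  "U_inp F x = (\<lambda>(i, \<alpha>). \<alpha> = {j \<in> xvars F i. x ! j})"

definition V_inp :: "cnf \<Rightarrow> bool list \<Rightarrow> nat \<times> nat set \<Rightarrow> bool" where
  "V_inp F y = (\<lambda>(i, \<alpha>). \<exists>(v, b) \<in> F ! i.
      (case v of Inl j \<Rightarrow> (j \<in> \<alpha>) = b | Inr j \<Rightarrow> y ! j = b))"

text \<open>A monotone circuit is a nonempty list of binary AND/OR gates; each gate reads
  inputs or earlier gates; the output is the last gate; its size is the number of gates.\<close>

datatype 'v wire = Inp 'v | Gt nat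
datatype 'v gate = AndG "'v wire" "'v wire" | OrG "'v wire" "'v wire"

fun wire_val :: "('v \<Rightarrow> bool) \<Rightarrow> bool list \<Rightarrow> 'v wire \<Rightarrow> bool" where
  "wire_val \<rho> vs (Inp v) = \<rho> v"
| "wire_val \<rho> vs (Gt j) = vs ! j"

fun gate_val :: "('v \<Rightarrow> bool) \<Rightarrow> bool list \<Rightarrow> 'v gate \<Rightarrow> bool" where
  "gate_val \<rho> vs (AndG a b) = (wire_val \<rho> vs a \<and> wire_val \<rho> vs b)"
| "gate_val \<rho> vs (OrG a b) = (wire_val \<rho> vs a \<or> wire_val \<rho> vs b)"

definition circ_vals :: "('v \<Rightarrow> bool) \<Rightarrow> 'v gate list \<Rightarrow> bool list" where
  "circ_vals \<rho> gs = foldl (\<lambda>vs g. vs @ [gate_val \<rho> vs g]) [] gs"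

definition circ_out :: "('v \<Rightarrow> bool) \<Rightarrow> 'v gate list \<Rightarrow> bool" where
  "circ_out \<rho> gs = last (circ_vals \<rho> gs)"

fun wire_ok :: "'v set \<Rightarrow> nat \<Rightarrow> 'v wire \<Rightarrow> bool" where
  "wire_ok V k (Inp v) = (v \<in> V)"
| "wire_ok V k (Gt j) = (j < k)"

fun gate_ok :: "'v set \<Rightarrow> nat \<Rightarrow> 'v gate \<Rightarrow> bool" where
  "gate_ok V k (AndG a b) = (wire_ok V k a \<and> wire_ok V k b)"
| "gate_ok V k (OrG a b) = (wire_ok V k a \<and> wire_ok V k b)"

definition monotone_circuit :: "'v set \<Rightarrow> 'v gate list \<Rightarrow> bool" where
  "monotone_circuit V gs \<longleftrightarrow> gs \<noteq> [] \<and> (\<forall>k < length gs. gate_ok V k (gs ! k))"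

end

theory Submission
  imports Defs
begin

lemma foldl_app_ex:
  "\<exists>zs. foldl (\<lambda>vs g. vs @ [gate_val \<rho> vs g]) ws hs = ws @ zs \<and> length zs = length hs"
proof (induction hs arbitrary: ws)
  case Nil then show ?case by simp
next
  case (Cons h hs)
  obtain zs where z: "foldl (\<lambda>vs g. vs @ [gate_val \<rho> vs g]) (ws @ [gate_val \<rho> ws h]) hs = (ws @ [gate_val \<rho> ws h]) @ zs"
    "length zs = length hs" using Cons.IH by blast
  show ?case by (rule exI[of _ "gate_val \<rho> ws h # zs"]) (simp add: z)
qed

lemma clause_split:
  "clause_sat x y C \<longleftrightarrow> (\<exists>p\<in>C. \<exists>j. fst p = Inl j \<and> x ! j = snd p) \<or> (\<exists>p\<in>C. \<exists>j. fst p = Inr j \<and> y ! j = snd p)"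
proof -
  have "clause_sat x y C \<longleftrightarrow> (\<exists>p\<in>C. var_val x y (fst p) = snd p)"
    unfolding clause_sat_def by (simp add: case_prod_beta)
  also have "\<dots> \<longleftrightarrow> (\<exists>p\<in>C. (\<exists>j. fst p = Inl j \<and> x ! j = snd p) \<or> (\<exists>j. fst p = Inr j \<and> y ! j = snd p))"
  proof -
    have "var_val x y v = c \<longleftrightarrow> (\<exists>j. v = Inl j \<and> x ! j = c) \<or> (\<exists>j. v = Inr j \<and> y ! j = c)" for v c
      by (cases v) simp_all
    then show ?thesis by simp
  qed
  also have "\<dots> \<longleftrightarrow> (\<exists>p\<in>C. \<exists>j. fst p = Inl j \<and> x ! j = snd p) \<or> (\<exists>p\<in>C. \<exists>j. fst p = Inr j \<and> y ! j = snd p)"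
    by blast
  finally show ?thesis .
qed

lemma circ_vals_len: "length (circ_vals \<rho> gs) = length gs"
  using foldl_app_ex[of \<rho> "[]" gs] unfolding circ_vals_def by auto

lemma circ_vals_nth:
  assumes "k < length gs"
  shows "circ_vals \<rho> gs ! k = gate_val \<rho> (take k (circ_vals \<rho> gs)) (gs ! k)"
proof -
  define f where "f = (\<lambda>vs g. vs @ [gate_val \<rho> vs g])"
  have gs: "gs = take k gs @ (gs ! k) # drop (Suc k) gs"
    using assms by (simp add: Cons_nth_drop_Suc)
  define A where "A = circ_vals \<rho> (take k gs)"
  have lA: "length A = k" unfolding A_def using circ_vals_len[of \<rho> "take k gs"] assms by simp
  have "circ_vals \<rho> gs = foldl f (foldl f [] (take k gs @ [gs ! k])) (drop (Suc k) gs)"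
    unfolding circ_vals_def f_def by (subst gs) (simp del: append_take_drop_id)
  also have "foldl f [] (take k gs @ [gs ! k]) = A @ [gate_val \<rho> A (gs ! k)]"
    unfolding A_def circ_vals_def f_def by simp
  finally have e: "circ_vals \<rho> gs = foldl f (A @ [gate_val \<rho> A (gs ! k)]) (drop (Suc k) gs)" .
  obtain zs where p: "foldl f (A @ [gate_val \<rho> A (gs ! k)]) (drop (Suc k) gs) = (A @ [gate_val \<rho> A (gs ! k)]) @ zs"
    using foldl_app_ex[of \<rho> "A @ [gate_val \<rho> A (gs ! k)]" "drop (Suc k) gs"] unfolding f_def by blast
  have "circ_vals \<rho> gs = A @ gate_val \<rho> A (gs ! k) # zs" using e p by simp
  then have "circ_vals \<rho> gs ! k = gate_val \<rho> A (gs ! k)" "take k (circ_vals \<rho> gs) = A"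
    using lA by (simp_all add: nth_append)
  then show ?thesis by simp
qed

lemma wire_take:
  assumes "wire_ok V k w" "k \<le> length vs"
  shows "wire_val \<rho> (take k vs) w = wire_val \<rho> vs w"
  using assms by (cases w) auto

lemma gate_take:
  assumes "gate_ok V k g" "k \<le> length vs"
  shows "gate_val \<rho> (take k vs) g = gate_val \<rho> vs g"
proof (cases g)
  case (AndG a b)
  then show ?thesis using assms wire_take[of V k a vs \<rho>] wire_take[of V k b vs \<rho>] by simp
next
  case (OrG a b)
  then show ?thesis using assms wire_take[of V k a vs \<rho>] wire_take[of V k b vs \<rho>] by simp
qed

lemma circ_vals_nth':
  assumes "monotone_circuit V gs" "k < length gs"
  shows "circ_vals \<rho> gs ! k = gate_val \<rho> (circ_vals \<rho> gs) (gs ! k)"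
  using circ_vals_nth[OF assms(2)] gate_take[of V k "gs ! k" "circ_vals \<rho> gs" \<rho>] assms circ_vals_len[of \<rho> gs]
  unfolding monotone_circuit_def by simp

theorem mainTheorem3:
  fixes n1 n2 :: nat and F :: cnf and gs :: "(nat \<times> nat set) gate list" and l :: nat
  assumes "wf_cnf n1 n2 F"
    and "unsat n1 n2 F"
    and "monotone_circuit (tt_inputs F) gs"
    and "length gs = l"
    and "\<forall>x. length x = n1 \<longrightarrow> circ_out (U_inp F x) gs"
    and "\<forall>y. length y = n2 \<longrightarrow> \<not> circ_out (V_inp F y) gs"
  shows "\<exists>Ls. CC_refutation 2 n1 n2 F Ls \<and> length Ls = length F + l"
proof -
  define m where "m = length F"
  define vU where "vU x = circ_vals (U_inp F x) gs" for x
  define vV where "vV y = circ_vals (V_inp F y) gs" for y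
  define G where "G k = (\<lambda>x y. \<not> vU x ! k \<or> vV y ! k)" for k
  define Ls where "Ls = map (\<lambda>C x y. clause_sat x y C) F @ map G [0..<l]"
  have lenLs: "length Ls = m + l" unfolding Ls_def m_def by simp
  have LsC: "Ls ! i = (\<lambda>x y. clause_sat x y (F ! i))" if "i < m" for i
    using that unfolding Ls_def m_def by (simp add: nth_append)
  have LsG: "Ls ! (m + k) = G k" if "k < l" for k
    using that unfolding Ls_def m_def by (simp add: nth_append)
  have gne: "gs \<noteq> []" and gok: "\<And>k. k < l \<Longrightarrow> gate_ok (tt_inputs F) k (gs ! k)"
    using assms(3,4) unfolding monotone_circuit_def by auto
  have lpos: "l > 0" using gne assms(4) by auto
  define WL where "WL w = (\<lambda>x y. \<not> wire_val (U_inp F x) (vU x) w \<or> wire_val (V_inp F y) (vV y) w)" for w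
  define wl where "wl w = (case w of Inp (i, \<alpha>) \<Rightarrow> i | Gt j \<Rightarrow> m + j)" for w :: "(nat \<times> nat set) wire"
  have wire_lemma: "wl w < m + k \<and> (\<forall>x y. (Ls ! wl w) x y \<longrightarrow> WL w x y)"
    if "wire_ok (tt_inputs F) k w" "k < l" for w k
  proof (cases w)
    case (Inp p)
    obtain i \<alpha> where p: "p = (i, \<alpha>)" by (cases p)
    have i: "i < m" using that Inp p unfolding tt_inputs_def m_def by auto
    have "WL w x y" if cs: "clause_sat x y (F ! i)" for x y
    proof -
      { assume ua: "\<alpha> = {j \<in> xvars F i. x ! j}"
        from cs obtain v b where vb: "(v, b) \<in> F ! i" "var_val x y v = b"
          unfolding clause_sat_def by auto
        have "(case v of Inl j \<Rightarrow> (j \<in> \<alpha>) = b | Inr j \<Rightarrow> y ! j = b)"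
        proof (cases v)
          case (Inl j)
          then have "j \<in> xvars F i" using vb unfolding xvars_def by auto
          then show ?thesis using Inl vb ua by auto
        next
          case (Inr j) then show ?thesis using vb by auto
        qed
        then have "V_inp F y (i, \<alpha>)" unfolding V_inp_def using vb(1) by auto }
      then show ?thesis unfolding WL_def Inp p U_inp_def by auto
    qed
    then show ?thesis using i LsC[OF i] unfolding wl_def Inp p by auto
  next
    case (Gt j)
    then have "j < k" using that by simp
    then show ?thesis using LsG[of j] that unfolding wl_def Gt WL_def G_def by simp
  qed
  have vUk: "vU x ! k = gate_val (U_inp F x) (vU x) (gs ! k)" if "k < l" for x k
    unfolding vU_def using circ_vals_nth'[OF assms(3)] that assms(4) by simp
  have vVk: "vV y ! k = gate_val (V_inp F y) (vV y) (gs ! k)" if "k < l" for y k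
    unfolding vV_def using circ_vals_nth'[OF assms(3)] that assms(4) by simp
  have sem: "semantic_refutation n1 n2 F Ls"
    unfolding semantic_refutation_def
  proof (intro conjI allI impI)
    show "length F \<le> length Ls" using lenLs m_def by simp
    show "Ls \<noteq> []" using lenLs lpos by auto
    show "(Ls ! i) x y = clause_sat x y (F ! i)" if "i < length F" for i x y
      using LsC that m_def by simp
    fix x y assume va: "valid_assign n1 n2 x y"
    have "last Ls = G (l - 1)" using LsG[of "l - 1"] lenLs lpos
      by (simp add: last_conv_nth Ls_def)
    moreover have "last (vU x) = vU x ! (l - 1)" "last (vV y) = vV y ! (l - 1)"
      using circ_vals_len lpos assms(4) gne unfolding vU_def vV_def
      by (metis last_conv_nth length_0_conv)+
    ultimately show "\<not> last Ls x y" using assms(5,6) va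
      unfolding valid_assign_def circ_out_def G_def vU_def vV_def by simp
  next
    fix i assume i: "length F \<le> i \<and> i < length Ls"
    define k where "k = i - m"
    have k: "k < l" "i = m + k" using i lenLs unfolding k_def m_def by auto
    have ok: "gate_ok (tt_inputs F) k (gs ! k)" using gok k by simp
    show "\<exists>j ka. j < i \<and> ka < i \<and> (\<forall>x y. valid_assign n1 n2 x y \<longrightarrow> (Ls ! j) x y \<and> (Ls ! ka) x y \<longrightarrow> (Ls ! i) x y)"
    proof (cases "gs ! k")
      case (AndG a b)
      have wa: "wire_ok (tt_inputs F) k a" and wb: "wire_ok (tt_inputs F) k b" using ok AndG by auto
      show ?thesis
        apply (rule exI[of _ "wl a"], rule exI[of _ "wl b"])
        using wire_lemma[OF wa k(1)] wire_lemma[OF wb k(1)] LsG[OF k(1)] vUk[OF k(1)] vVk[OF k(1)] AndG k(2)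
        unfolding G_def WL_def by auto
    next
      case (OrG a b)
      have wa: "wire_ok (tt_inputs F) k a" and wb: "wire_ok (tt_inputs F) k b" using ok OrG by auto
      show ?thesis
        apply (rule exI[of _ "wl a"], rule exI[of _ "wl b"])
        using wire_lemma[OF wa k(1)] wire_lemma[OF wb k(1)] LsG[OF k(1)] vUk[OF k(1)] vVk[OF k(1)] OrG k(2)
        unfolding G_def WL_def by auto
    qed
  qed
  have cc: "cc_computable 2 n1 n2 L" if "L \<in> set Ls" for L
  proof -
    from that have "(\<exists>C. L = (\<lambda>x y. clause_sat x y C)) \<or> (\<exists>k. L = G k)"
      unfolding Ls_def by auto
    then show ?thesis
    proof
      assume "\<exists>C. L = (\<lambda>x y. clause_sat x y C)"
      then obtain C where L: "L = (\<lambda>x y. clause_sat x y C)" by blast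
      let ?P = "Alice (\<lambda>x. \<exists>p\<in>C. \<exists>j. fst p = Inl j \<and> x ! j = snd p) (Out True)
                  (Bob (\<lambda>y. \<exists>p\<in>C. \<exists>j. fst p = Inr j \<and> y ! j = snd p) (Out True) (Out False))
                :: (bool list, bool list) protocol"
      have "prot_eval ?P x y = L x y" for x y
        unfolding L using clause_split[of x y C] by simp
      then show ?thesis unfolding cc_computable_def by (intro exI[of _ ?P]) simp
    next
      assume "\<exists>k. L = G k"
      then obtain k where L: "L = G k" by blast
      let ?P = "Alice (\<lambda>x. vU x ! k) (Bob (\<lambda>y. vV y ! k) (Out True) (Out False)) (Out True)
                :: (bool list, bool list) protocol"
      have "prot_eval ?P x y = L x y" for x y unfolding L G_def by auto
      then show ?thesis unfolding cc_computable_def by (intro exI[of _ ?P]) simp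
    qed
  qed
  show ?thesis using sem cc lenLs m_def unfolding CC_refutation_def by auto
qed

end
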